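(* Let $K$ be a ramified quadratic extension of $\mathbb{Q}_2$, $d=2m$ with $m$ odd, $m\ge3$, and $f=a_1x_1^d+\dots+a_sx_s^d$ with all $a_i\in\mathcal{O}\setminus\{0\}$. Suppose that for some level $k$, $f$ has two variables at level $k$ with differing $\pi$-coefficients, a variable at level $k+1$, and a variable in at least one of the levels $k+2$ or $k+4$. Then $f$ has a nontrivial zero in $K$.
   Context: $\mathcal{O}$ is the ring of integers of $K$ and $\pi$ the uniformizer: $\pi=\sqrt{2},\sqrt{-2},\sqrt{10},\sqrt{-10},1+\sqrt{-1},1+\sqrt{-5}$ for $K=\mathbb{Q}_2(\sqrt2),\mathbb{Q}_2(\sqrt{-2}),\mathbb{Q}_2(\sqrt{10}),\mathbb{Q}_2(\sqrt{-10}),\mathbb{Q}_2(\sqrt{-1}),\mathbb{Q}_2(\sqrt{-5})$ respectively. Each unit $u$ has a unique expansion $u=c_0+c_1\pi+c_2\pi^2+\cdots$ with $c_j\in\{0,1\}$, $c_0=1$. Writing $a_i=\pi^r u$ with $u$ a unit, the variable $x_i$ is at level $r\bmod d$ (levels are residues modulo $d$), and its $\pi$-coefficient is $c_1$ of $u$. A nontrivial zero is a point of $K^s$, not all coordinates zero, where $f$ vanishes. *)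

theory Defs
  imports "HOL-Computational_Algebra.Polynomial"
begin

text \<open>The six ramified quadratic extensions K of Q_2 with their chosen uniformizers pi.\<close>
datatype ramified_case = Q2_sqrt2 | Q2_sqrt_m2 | Q2_sqrt10 | Q2_sqrt_m10 | Q2_sqrt_m1 | Q2_sqrt_m5

text \<open>Minimal polynomial over Z of the uniformizer pi:
  sqrt 2, sqrt(-2), sqrt 10, sqrt(-10), 1 + sqrt(-1), 1 + sqrt(-5).
  The ring of integers O of K is Z_2[pi] = lim Z[X]/(2^n, g).\<close>
fun minpoly :: "ramified_case \<Rightarrow> int poly" where
  "minpoly Q2_sqrt2 = [:-2, 0, 1:]"
| "minpoly Q2_sqrt_m2 = [:2, 0, 1:]"
| "minpoly Q2_sqrt10 = [:-10, 0, 1:]"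
| "minpoly Q2_sqrt_m10 = [:10, 0, 1:]"
| "minpoly Q2_sqrt_m1 = [:2, -2, 1:]"
| "minpoly Q2_sqrt_m5 = [:6, -2, 1:]"

definition upi :: "int poly" where "upi = [:0, 1:]"

text \<open>Congruence in O / 2^n O = Z[X]/(2^n, g).\<close>
definition congO :: "ramified_case \<Rightarrow> nat \<Rightarrow> int poly \<Rightarrow> int poly \<Rightarrow> bool" where
  "congO K n p q \<longleftrightarrow> (\<exists>h k. p - q = smult (2 ^ n) h + minpoly K * k)"

text \<open>An element of O is a coherent sequence of representatives x n of its images in O / 2^n O.\<close>
definition is_O :: "ramified_case \<Rightarrow> (nat \<Rightarrow> int poly) \<Rightarrow> bool" where
  "is_O K x \<longleftrightarrow> (\<forall>n. congO K n (x (Suc n)) (x n))"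

definition O_nonzero :: "ramified_case \<Rightarrow> (nat \<Rightarrow> int poly) \<Rightarrow> bool" where
  "O_nonzero K x \<longleftrightarrow> (\<exists>n. \<not> congO K n (x n) 0)"

definition dvdO :: "ramified_case \<Rightarrow> int poly \<Rightarrow> (nat \<Rightarrow> int poly) \<Rightarrow> bool" where
  "dvdO K y x \<longleftrightarrow> (\<forall>n. \<exists>z. congO K n (x n) (y * z))"

definition valO :: "ramified_case \<Rightarrow> (nat \<Rightarrow> int poly) \<Rightarrow> nat" where
  "valO K x = (LEAST r. \<not> dvdO K (upi ^ Suc r) x)"

definition level :: "ramified_case \<Rightarrow> nat \<Rightarrow> (nat \<Rightarrow> int poly) \<Rightarrow> nat" where
  "level K d x = valO K x mod d"

text \<open>pi-coefficient c_1 of the unit u = x / pi^r in its expansion u = 1 + c_1 pi + c_2 pi^2 + ...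
  (c_j in {0,1}); i.e. u = 1 + c_1 pi mod pi^2, equivalently x = pi^r (1 + c_1 pi) mod pi^(r+2).\<close>
definition pi_coeff :: "ramified_case \<Rightarrow> (nat \<Rightarrow> int poly) \<Rightarrow> int" where
  "pi_coeff K x = (THE c. c \<in> {0, 1} \<and>
      dvdO K (upi ^ (valO K x + 2)) (\<lambda>n. x n - upi ^ valO K x * [:1, c:]))"

text \<open>f = sum a_i x_i^d has a nontrivial zero (with coordinates in O; equivalent to K by homogeneity).\<close>
definition has_nontrivial_zero ::
  "ramified_case \<Rightarrow> nat \<Rightarrow> nat \<Rightarrow> (nat \<Rightarrow> nat \<Rightarrow> int poly) \<Rightarrow> bool" where
  "has_nontrivial_zero K d s a \<longleftrightarrow>
     (\<exists>x :: nat \<Rightarrow> nat \<Rightarrow> int poly. (\<forall>i<s. is_O K (x i)) \<and> (\<exists>i<s. O_nonzero K (x i)) \<and>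
        (\<forall>n. congO K n (\<Sum>i<s. a i n * x i n ^ d) 0))"

end

theory Submission
  imports Defs
begin

definition g0 :: "ramified_case \<Rightarrow> int" where "g0 K = coeff (minpoly K) 0"
definition g1 :: "ramified_case \<Rightarrow> int" where "g1 K = coeff (minpoly K) 1"

lemma minpoly_eq: "minpoly K = [:g0 K, g1 K, 1:]"
  by (cases K) (simp_all add: g0_def g1_def)

lemma g1_even: "even (g1 K)"
  by (cases K) (simp_all add: g0_def g1_def)

lemma g0_form: "g0 K = 2 * (g0 K div 2) \<and> odd (g0 K div 2)"
  by (cases K) (simp_all add: g0_def g1_def)

definition Jm :: "ramified_case \<Rightarrow> nat \<Rightarrow> nat \<Rightarrow> int poly \<Rightarrow> bool" where
  "Jm K n r p \<longleftrightarrow> (\<exists>h k z. p = smult (2^n) h + minpoly K * k + upi ^ r * z)"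

lemma Jm_add: "Jm K n r p \<Longrightarrow> Jm K n r q \<Longrightarrow> Jm K n r (p + q)"
  unfolding Jm_def
proof (elim exE)
  fix h k z h' k' z'
  assume "p = smult (2 ^ n) h + minpoly K * k + upi ^ r * z" "q = smult (2 ^ n) h' + minpoly K * k' + upi ^ r * z'"
  then show "\<exists>h k z. p + q = smult (2 ^ n) h + minpoly K * k + upi ^ r * z"
    by (intro exI[of _ "h + h'"] exI[of _ "k + k'"] exI[of _ "z + z'"]) (simp add: algebra_simps smult_add_right)
qed

lemma Jm_uminus: "Jm K n r p \<Longrightarrow> Jm K n r (- p)"
  unfolding Jm_def
proof (elim exE)
  fix h k z
  assume "p = smult (2 ^ n) h + minpoly K * k + upi ^ r * z"
  then show "\<exists>h k z. - p = smult (2 ^ n) h + minpoly K * k + upi ^ r * z"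
    by (intro exI[of _ "- h"] exI[of _ "- k"] exI[of _ "- z"]) (simp add: algebra_simps)
qed

lemma Jm_diff: "Jm K n r p \<Longrightarrow> Jm K n r q \<Longrightarrow> Jm K n r (p - q)"
  using Jm_add[of K n r p "-q"] Jm_uminus by simp

lemma Jm_multl: "Jm K n r p \<Longrightarrow> Jm K n r (q * p)"
  unfolding Jm_def
proof (elim exE)
  fix h k z
  assume "p = smult (2 ^ n) h + minpoly K * k + upi ^ r * z"
  then show "\<exists>h k z. q * p = smult (2 ^ n) h + minpoly K * k + upi ^ r * z"
    by (intro exI[of _ "q * h"] exI[of _ "q * k"] exI[of _ "q * z"]) (simp add: algebra_simps)
qed

lemma Jm_multr: "Jm K n r p \<Longrightarrow> Jm K n r (p * q)"
  using Jm_multl[of K n r p q] by (simp add: mult.commute)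

lemma Jm_0 [simp]: "Jm K n r 0"
  unfolding Jm_def by (intro exI[of _ 0]) simp

lemma Jm_r0 [simp]: "Jm K n 0 p"
  unfolding Jm_def by (intro exI[of _ 0] exI[of _ 0] exI[of _ p]) simp

lemma Jm_X: "Jm K n r (upi ^ r * q)"
  unfolding Jm_def by (intro exI[of _ 0] exI[of _ 0] exI[of _ q]) simp

lemma Jm_g: "Jm K n r (minpoly K * q)"
  unfolding Jm_def by (intro exI[of _ 0] exI[of _ q] exI[of _ 0]) simp

lemma Jm_2n: "Jm K n r (smult (2^n) q)"
  unfolding Jm_def by (intro exI[of _ q] exI[of _ 0] exI[of _ 0]) simp

lemma Jm_mono: "Jm K n r p \<Longrightarrow> r' \<le> r \<Longrightarrow> Jm K n r' p"
  unfolding Jm_def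
proof (elim exE)
  fix h k z
  assume "p = smult (2 ^ n) h + minpoly K * k + upi ^ r * z" "r' \<le> r"
  moreover have "upi ^ r = upi ^ r' * upi ^ (r - r')" using \<open>r' \<le> r\<close> by (simp add: power_add[symmetric])
  ultimately show "\<exists>h k z. p = smult (2 ^ n) h + minpoly K * k + upi ^ r' * z"
    by (intro exI[of _ h] exI[of _ k] exI[of _ "upi ^ (r - r') * z"]) (simp add: algebra_simps)
qed

lemma Jm_nmono: "Jm K n r p \<Longrightarrow> n' \<le> n \<Longrightarrow> Jm K n' r p"
  unfolding Jm_def
proof (elim exE)
  fix h k z
  assume "p = smult (2 ^ n) h + minpoly K * k + upi ^ r * z" "n' \<le> n"
  moreover have "smult (2 ^ n) h = smult (2 ^ n') (smult (2 ^ (n - n')) h)"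
    using \<open>n' \<le> n\<close> by (simp add: power_add[symmetric])
  ultimately show "\<exists>h k z. p = smult (2 ^ n') h + minpoly K * k + upi ^ r * z"
    by (intro exI[of _ "smult (2 ^ (n - n')) h"] exI[of _ k] exI[of _ z]) simp
qed

lemma Jm_shift: "Jm K n r p \<Longrightarrow> Jm K n (r + s) (upi ^ s * p)"
  unfolding Jm_def
proof (elim exE)
  fix h k z
  assume "p = smult (2 ^ n) h + minpoly K * k + upi ^ r * z"
  then show "\<exists>h k z. upi ^ s * p = smult (2 ^ n) h + minpoly K * k + upi ^ (r + s) * z"
    by (intro exI[of _ "upi ^ s * h"] exI[of _ "upi ^ s * k"] exI[of _ z]) (simp add: algebra_simps power_add)
qed

lemma Jm_mult: "Jm K n a p \<Longrightarrow> Jm K n b q \<Longrightarrow> Jm K n (a + b) (p * q)"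
proof -
  assume "Jm K n a p" "Jm K n b q"
  then obtain h k z where p: "p = smult (2 ^ n) h + minpoly K * k + upi ^ a * z" unfolding Jm_def by blast
  have 1: "Jm K n (a + b) (smult (2 ^ n) h * q)" using Jm_2n[of K n "a+b" "h * q"] by simp
  have 2: "Jm K n (a + b) (minpoly K * k * q)" using Jm_g[of K n "a+b" "k * q"] by (simp add: mult.assoc)
  have 3: "Jm K n (a + b) (upi ^ a * z * q)"
    using Jm_shift[OF Jm_multl[OF \<open>Jm K n b q\<close>, of z], of a] by (simp add: algebra_simps)
  show ?thesis unfolding p using Jm_add[OF Jm_add[OF 1 2] 3] by (simp add: algebra_simps)
qed

lemma congO_iff: "congO K n p q \<longleftrightarrow> (\<exists>h k. p - q = smult (2 ^ n) h + minpoly K * k)"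
  by (simp add: congO_def)

lemma congO_Jm: "congO K n p 0 \<Longrightarrow> Jm K n r p"
  unfolding congO_def Jm_def by (metis add.right_neutral diff_zero mult_zero_right)

lemma X2_eq: "upi ^ 2 = minpoly K + smult 2 [:- (g0 K div 2), - (g1 K div 2):]"
proof -
  have a: "g0 K = 2 * (g0 K div 2)" using g0_form by blast
  have b: "g1 K = 2 * (g1 K div 2)" using g1_even by auto
  show ?thesis unfolding minpoly_eq upi_def
    apply (subst a) apply (subst b) by (simp add: power2_eq_square)
qed

lemma Xpow_2n: "\<exists>h k. upi ^ (2 * n) = smult (2 ^ n) h + minpoly K * k"
proof (induction n)
  case 0
  then show ?case by (intro exI[of _ 1] exI[of _ 0]) simp
next
  case (Suc n)
  then obtain h k where hk: "upi ^ (2 * n) = smult (2 ^ n) h + minpoly K * k" by blast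
  define c where "c = [:- (g0 K div 2), - (g1 K div 2):]"
  have "upi ^ (2 * Suc n) = upi ^ (2 * n) * upi ^ 2" by (simp add: power_add[symmetric])
  also have "\<dots> = (smult (2 ^ n) h + minpoly K * k) * (minpoly K + smult 2 c)"
    using hk X2_eq c_def by simp
  also have "\<dots> = smult (2 ^ Suc n) (h * c) + minpoly K * (smult (2^n) h + k * minpoly K + smult 2 (k * c))"
    by (simp add: algebra_simps)
  finally show ?case by blast
qed

lemma Jm_2n_cong: "Jm K n r p \<Longrightarrow> 2 * n \<le> r \<Longrightarrow> congO K n p 0"
proof -
  assume "Jm K n r p" "2 * n \<le> r"
  then have "Jm K n (2*n) p" using Jm_mono by blast
  then obtain h k z where p: "p = smult (2 ^ n) h + minpoly K * k + upi ^ (2*n) * z" unfolding Jm_def by blast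
  obtain h' k' where "upi ^ (2 * n) = smult (2 ^ n) h' + minpoly K * k'" using Xpow_2n by blast
  then have "p = smult (2 ^ n) (h + h' * z) + minpoly K * (k + k' * z)" using p by (simp add: algebra_simps smult_add_right)
  then show ?thesis unfolding congO_def by auto
qed


lemma odd_inv: "odd (N::int) \<Longrightarrow> \<exists>v w. N * v = 1 + 2 ^ M * w"
proof -
  assume "odd N"
  then have "coprime N (2 ^ M)" by (simp add: coprime_power_right_iff)
  then have "gcd N (2 ^ M) = 1" by (simp add: coprime_iff_gcd_eq_1)
  with bezout_int[of N "2 ^ M"] obtain a b where "a * N + b * 2 ^ M = 1" by auto
  then show ?thesis by (intro exI[of _ a] exI[of _ "- b"]) (simp add: algebra_simps)
qed

lemma two_rep: "\<exists>u h k e b. 2 = upi^2 * u + smult (2^n) h + minpoly K * k \<and> u = [:1 + 2 * e, b:]"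
proof -
  define p where "p = - (g0 K div 2)"
  define q where "q = - (g1 K div 2)"
  have g0: "g0 K = - 2 * p" using g0_form[of K] p_def by linarith
  have g1: "g1 K = - 2 * q" using g1_even[of K] q_def by auto
  have podd: "odd p" using g0_form[of K] p_def by simp
  define Nc where "Nc = p * (p - q * g1 K) + q^2 * g0 K"
  have "odd Nc" unfolding Nc_def g0 g1 using podd by (simp add: algebra_simps)
  then obtain v w where vw: "Nc * v = 1 + 2 ^ (n+1) * w" using odd_inv by blast
  have "odd (Nc * v)" unfolding vw by simp
  then have vodd: "odd v" by simp
  define c where "c = [:p, q:]"
  define cc where "cc = [:p - q * g1 K, - q:]"
  have X2: "upi ^ 2 = minpoly K + smult 2 c" using X2_eq[of K] unfolding c_def p_def q_def by simp
  have ccc: "c * cc = [:Nc:] - smult (q^2) (minpoly K)"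
    unfolding c_def cc_def Nc_def minpoly_eq by (simp add: algebra_simps power2_eq_square)
  define u where "u = smult v cc"
  have a1: "upi^2 * u = minpoly K * u + smult (2 * v) (c * cc)" unfolding X2 u_def by (simp add: algebra_simps)
  have a2: "smult (2 * v) (c * cc) = [:2 * (Nc * v):] - minpoly K * [:2 * v * q^2:]" unfolding ccc
    by (simp add: algebra_simps smult_diff_right)
  define S where "S = smult (2^n) [:4 * w:]"
  have a3: "[:2 * (Nc * v):] = 2 + S" unfolding vw S_def
    by (simp add: algebra_simps numeral_poly)
  have "2 = upi^2 * u - S + minpoly K * ([:2 * v * q^2:] - u)"
    using a1 a2 a3 by (simp add: algebra_simps)
  then have eq: "2 = upi^2 * u + smult (2^n) (- [:4 * w:]) + minpoly K * ([:2 * v * q^2:] - u)"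
    unfolding S_def by (simp only: smult_minus_right diff_conv_add_uminus)
  have "odd (v * (p - q * g1 K))" using vodd podd g1 by simp
  then obtain e where e: "v * (p - q * g1 K) = 2 * e + 1" by (rule oddE)
  have "u = [:v * (p - q * g1 K), - v * q:]" unfolding u_def cc_def by simp
  then have "u = [:1 + 2 * e, - v * q:]" using e by simp
  with eq show ?thesis by (intro exI[of _ u] exI[of _ "- [:4 * w:]"] exI[of _ "[:2 * v * q^2:] - u"] exI[of _ e] exI[of _ "- v * q"]) simp
qed

lemma Jm_two: "Jm K n 2 2"
proof -
  obtain u h k e b where e: "2 = upi^2 * u + smult (2^n) h + minpoly K * k" by (metis two_rep)
  show ?thesis unfolding Jm_def by (rule exI[of _ h], rule exI[of _ k], rule exI[of _ u]) (subst e, simp)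
qed

lemma Jm_two3: "Jm K n 3 (2 - upi^2)"
proof -
  obtain u h k e b where eq: "2 = upi^2 * u + smult (2^n) h + minpoly K * k" and u: "u = [:1 + 2 * e, b:]"
    by (metis two_rep)
  have "u - 1 = [:e:] * 2 + upi * [:b:]" unfolding u upi_def by (simp add: algebra_simps numeral_poly one_pCons)
  moreover have "Jm K n 2 ([:e:] * 2)" by (rule Jm_multl[OF Jm_two])
  then have "Jm K n 1 ([:e:] * 2)" by (rule Jm_mono) simp
  moreover have "Jm K n 1 (upi * [:b:])" using Jm_X[of K n 1 "[:b:]"] by (simp only: power_one_right)
  ultimately have "Jm K n 1 (u - 1)" using Jm_add by metis
  then have "Jm K n (1 + 2) (upi^2 * (u - 1))" by (rule Jm_shift)
  then have "Jm K n 3 (upi^2 * (u - 1))" by (simp add: numeral_3_eq_3)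
  moreover have "2 - upi^2 = upi^2 * (u - 1) + smult (2^n) h + minpoly K * k"
    using eq by (simp add: algebra_simps)
  ultimately show ?thesis using Jm_add[OF Jm_add[OF _ Jm_2n] Jm_g] by metis
qed


lemma Jm_pow: "Jm K n a p \<Longrightarrow> Jm K n (a * k) (p ^ k)"
proof (induction k)
  case 0
  then show ?case by simp
next
  case (Suc k)
  then have "Jm K n (a + a * k) (p * p ^ k)" using Jm_mult by blast
  then show ?case by (simp add: algebra_simps)
qed

lemma Jm_const2pow: "Jm K n (2 * j) [:2 ^ j:]"
proof -
  have "Jm K n (2 * j) (2 ^ j)" using Jm_pow[OF Jm_two, of K n j] by simp
  moreover have "(2 :: int poly) ^ j = [:2 ^ j:]" by (induction j) (simp_all add: numeral_poly)
  ultimately show ?thesis by simp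
qed

lemma congO_Jm_all: "congO K n0 a b \<Longrightarrow> r \<le> 2 * n0 \<Longrightarrow> Jm K n r (a - b)"
proof -
  assume "congO K n0 a b" "r \<le> 2 * n0"
  then obtain h k where hk: "a - b = smult (2 ^ n0) h + minpoly K * k" unfolding congO_def by blast
  have "Jm K n (2 * n0) ([:2 ^ n0:] * h)" by (rule Jm_multr[OF Jm_const2pow])
  then have "Jm K n r (smult (2 ^ n0) h)" using \<open>r \<le> 2 * n0\<close> Jm_mono by simp
  then show ?thesis unfolding hk using Jm_add Jm_g by blast
qed

lemma Jm_up: "Jm K n0 r p \<Longrightarrow> r \<le> 2 * n0 \<Longrightarrow> Jm K n r p"
proof -
  assume "Jm K n0 r p" "r \<le> 2 * n0"
  then obtain h k z where p: "p = smult (2 ^ n0) h + minpoly K * k + upi ^ r * z" unfolding Jm_def by blast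
  have "Jm K n (2 * n0) ([:2 ^ n0:] * h)" by (rule Jm_multr[OF Jm_const2pow])
  then have "Jm K n r (smult (2 ^ n0) h)" using \<open>r \<le> 2 * n0\<close> Jm_mono by simp
  then show ?thesis unfolding p by (intro Jm_add Jm_g Jm_X)
qed

lemma Jm_digit: "Jm K n N p \<Longrightarrow> Jm K n (Suc N) p \<or> Jm K n (Suc N) (p - upi ^ N)"
proof -
  assume "Jm K n N p"
  then obtain h k z where p: "p = smult (2 ^ n) h + minpoly K * k + upi ^ N * z" unfolding Jm_def by blast
  obtain z0 z' where z: "z = pCons z0 z'" by (cases z)
  define R where "R = smult (2 ^ n) h + minpoly K * k + upi ^ Suc N * z'"
  have R: "Jm K n (Suc N) R" unfolding R_def by (intro Jm_add Jm_2n Jm_g Jm_X)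
  have "pCons z0 z' = [:z0:] + upi * z'" unfolding upi_def by simp
  then have p2: "p = R + upi ^ N * [:z0:]" unfolding p z R_def by (simp add: algebra_simps)
  obtain e where e: "z0 = 2 * e \<or> z0 = 2 * e + 1" by (metis evenE oddE)
  have E: "Jm K n (Suc N) (upi ^ N * [:2 * e:])"
  proof -
    have "Jm K n 2 ([:e:] * 2)" by (rule Jm_multl[OF Jm_two])
    then have "Jm K n (2 + N) (upi ^ N * ([:e:] * 2))" by (rule Jm_shift)
    then have "Jm K n (Suc N) (upi ^ N * ([:e:] * 2))" by (rule Jm_mono) simp
    moreover have "[:e:] * 2 = [:2 * e:]" by (simp add: numeral_poly)
    ultimately show ?thesis by (simp only:)
  qed
  from e show ?thesis
  proof
    assume "z0 = 2 * e"
    then have "p = R + upi ^ N * [:2 * e:]" using p2 by simp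
    then show ?thesis using Jm_add[OF R E] by simp
  next
    assume "z0 = 2 * e + 1"
    then have "p - upi ^ N = R + upi ^ N * [:2 * e:]" using p2 by (simp add: algebra_simps smult_add_left)
    then show ?thesis using Jm_add[OF R E] by simp
  qed
qed

definition V :: "ramified_case \<Rightarrow> nat \<Rightarrow> (nat \<Rightarrow> int poly) \<Rightarrow> bool" where
  "V K N x \<longleftrightarrow> (\<forall>n. Jm K n N (x n))"

lemma dvdO_V: "dvdO K (upi ^ N) x \<longleftrightarrow> V K N x"
proof -
  have "(\<exists>z. congO K n (x n) (upi ^ N * z)) \<longleftrightarrow> Jm K n N (x n)" for n
  proof
    assume "\<exists>z. congO K n (x n) (upi ^ N * z)"
    then obtain z h k where "x n - upi ^ N * z = smult (2 ^ n) h + minpoly K * k" unfolding congO_def by blast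
    then have "x n = smult (2 ^ n) h + minpoly K * k + upi ^ N * z" by (simp add: algebra_simps)
    then show "Jm K n N (x n)" unfolding Jm_def by blast
  next
    assume "Jm K n N (x n)"
    then obtain h k z where "x n = smult (2 ^ n) h + minpoly K * k + upi ^ N * z" unfolding Jm_def by blast
    then have "x n - upi ^ N * z = smult (2 ^ n) h + minpoly K * k" by (simp add: algebra_simps)
    then show "\<exists>z. congO K n (x n) (upi ^ N * z)" unfolding congO_def by blast
  qed
  then show ?thesis unfolding dvdO_def V_def by blast
qed

lemma congO_refl: "congO K n a a"
  unfolding congO_def by (intro exI[of _ 0]) simp

lemma congO_trans: "congO K n a b \<Longrightarrow> congO K n b c \<Longrightarrow> congO K n a c"
proof -
  assume "congO K n a b" "congO K n b c"
  then obtain h k h' k' where "a - b = smult (2 ^ n) h + minpoly K * k" "b - c = smult (2 ^ n) h' + minpoly K * k'"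
    unfolding congO_def by blast
  then have "a - c = smult (2 ^ n) (h + h') + minpoly K * (k + k')" by (simp add: algebra_simps smult_add_right)
  then show ?thesis unfolding congO_def by blast
qed

lemma congO_nmono: "congO K n a b \<Longrightarrow> n' \<le> n \<Longrightarrow> congO K n' a b"
proof -
  assume "congO K n a b" "n' \<le> n"
  then obtain h k where "a - b = smult (2 ^ n) h + minpoly K * k" unfolding congO_def by blast
  moreover have "smult (2 ^ n) h = smult (2 ^ n') (smult (2 ^ (n - n')) h)"
    using \<open>n' \<le> n\<close> by (simp add: power_add[symmetric])
  ultimately show ?thesis unfolding congO_def by metis
qed

lemma is_O_coh: assumes O: "is_O K x" shows "n0 \<le> n \<Longrightarrow> congO K n0 (x n) (x n0)"
proof (induction n rule: dec_induct)
  case base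
  then show ?case by (rule congO_refl)
next
  case (step n)
  have "congO K n (x (Suc n)) (x n)" using O unfolding is_O_def by blast
  then have "congO K n0 (x (Suc n)) (x n)" using congO_nmono step.hyps by blast
  then show ?case using congO_trans step.IH by blast
qed

lemma congO_Jm2: "congO K n a b \<Longrightarrow> Jm K n r (b - a)"
proof -
  assume "congO K n a b"
  then obtain h k where "a - b = smult (2 ^ n) h + minpoly K * k" unfolding congO_def by blast
  then have "b - a = smult (2 ^ n) (- h) + minpoly K * (- k)" by (simp add: algebra_simps)
  moreover have "Jm K n r (smult (2 ^ n) (- h) + minpoly K * (- k))" by (intro Jm_add Jm_2n Jm_g)
  ultimately show ?thesis by simp
qed

lemma V_digit: "is_O K x \<Longrightarrow> V K N x \<Longrightarrow> V K (Suc N) x \<or> V K (Suc N) (\<lambda>n. x n - upi ^ N)"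
proof -
  assume O: "is_O K x" and VN: "V K N x"
  define n0 where "n0 = Suc N"
  have key: "V K (Suc N) (\<lambda>n. x n - b)" if b: "Jm K n0 (Suc N) (x n0 - b)" for b
    unfolding V_def
  proof
    fix n
    show "Jm K n (Suc N) (x n - b)"
    proof (cases "n \<le> n0")
      case True
      then have "congO K n (x n0) (x n)" by (rule is_O_coh[OF O])
      then have "Jm K n (Suc N) (x n - x n0)" by (rule congO_Jm2)
      moreover have "Jm K n (Suc N) (x n0 - b)" using b True by (rule Jm_nmono)
      ultimately have "Jm K n (Suc N) ((x n - x n0) + (x n0 - b))" by (rule Jm_add)
      then show ?thesis by simp
    next
      case False
      then have "n0 \<le> n" by simp
      then have "congO K n0 (x n) (x n0)" by (rule is_O_coh[OF O])
      then have "Jm K n (Suc N) (x n - x n0)" by (rule congO_Jm_all) (simp add: n0_def)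
      moreover have "Jm K n (Suc N) (x n0 - b)" using b by (rule Jm_up) (simp add: n0_def)
      ultimately have "Jm K n (Suc N) ((x n - x n0) + (x n0 - b))" by (rule Jm_add)
      then show ?thesis by simp
    qed
  qed
  have "Jm K n0 N (x n0)" using VN unfolding V_def by blast
  then have "Jm K n0 (Suc N) (x n0) \<or> Jm K n0 (Suc N) (x n0 - upi ^ N)" by (rule Jm_digit)
  then show ?thesis
  proof
    assume "Jm K n0 (Suc N) (x n0)"
    then have "V K (Suc N) (\<lambda>n. x n - 0)" using key[of 0] by simp
    then show ?thesis by simp
  next
    assume "Jm K n0 (Suc N) (x n0 - upi ^ N)"
    then have "V K (Suc N) (\<lambda>n. x n - upi ^ N)" by (rule key)
    then show ?thesis by (rule disjI2)
  qed
qed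


definition ev :: "complex \<Rightarrow> int poly \<Rightarrow> complex" where
  "ev a p = poly (map_poly of_int p) a"

lemma map_poly_of_int_add: "map_poly (of_int :: int \<Rightarrow> complex) (p + q) = map_poly of_int p + map_poly of_int q"
  by (intro poly_eqI) (simp add: coeff_map_poly)

lemma map_poly_of_int_mult: "map_poly (of_int :: int \<Rightarrow> complex) (p * q) = map_poly of_int p * map_poly of_int q"
  by (intro poly_eqI) (simp add: coeff_map_poly coeff_mult)

lemma ev_add [simp]: "ev a (p + q) = ev a p + ev a q"
  unfolding ev_def map_poly_of_int_add by simp

lemma ev_mult [simp]: "ev a (p * q) = ev a p * ev a q"
  unfolding ev_def map_poly_of_int_mult by simp

lemma ev_pCons [simp]: "ev a (pCons c p) = of_int c + a * ev a p"
  unfolding ev_def by (simp add: map_poly_pCons)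

lemma ev_0 [simp]: "ev a 0 = 0"
  unfolding ev_def by simp

lemma ev_1 [simp]: "ev a 1 = 1"
  unfolding ev_def by simp

lemma ev_minus [simp]: "ev a (- p) = - ev a p"
proof -
  have "ev a (- p) + ev a p = 0" unfolding ev_add[symmetric] by simp
  then show ?thesis by (simp add: add_eq_0_iff2)
qed

lemma ev_diff [simp]: "ev a (p - q) = ev a p - ev a q"
  using ev_add[of a p "- q"] by simp

lemma ev_smult [simp]: "ev a (smult c p) = of_int c * ev a p"
proof -
  have "smult c p = [:c:] * p" by simp
  then show ?thesis by (simp only: ev_mult) simp
qed

lemma ev_pow [simp]: "ev a (p ^ k) = ev a p ^ k"
  by (induction k) simp_all

lemma ev_upi [simp]: "ev a upi = a"
  unfolding upi_def by simp

lemma roots_exist: "\<exists>\<alpha> \<beta> :: complex. \<alpha> + \<beta> = of_int (- g1 K) \<and> \<alpha> * \<beta> = of_int (g0 K)"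
proof -
  define D where "D = csqrt (of_int (g1 K ^ 2 - 4 * g0 K))"
  have D2: "D * D = of_int (g1 K ^ 2 - 4 * g0 K)" unfolding D_def using power2_csqrt by (simp add: power2_eq_square)
  have "(- of_int (g1 K) + D) / 2 + (- of_int (g1 K) - D) / 2 = of_int (- g1 K)" by (simp add: field_simps)
  moreover have "((- of_int (g1 K) + D) / 2) * ((- of_int (g1 K) - D) / 2) = of_int (g0 K)"
    using D2 by (simp add: field_simps power2_eq_square)
  ultimately show ?thesis by blast
qed

lemma ev_pair:
  assumes s: "\<alpha> + \<beta> = of_int (- g1 K)" and p: "\<alpha> * \<beta> = of_int (g0 K)"
  shows "\<exists>a b. ev \<alpha> f = of_int a + of_int b * \<alpha> \<and> ev \<beta> f = of_int a + of_int b * \<beta> \<and> even (a - coeff f 0)"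
proof (induction f)
  case 0
  then show ?case by (intro exI[of _ 0]) simp
next
  case (pCons c f)
  then obtain a b where ab: "ev \<alpha> f = of_int a + of_int b * \<alpha>" "ev \<beta> f = of_int a + of_int b * \<beta>" by blast
  have a2: "\<alpha> * \<alpha> = - of_int (g1 K) * \<alpha> - of_int (g0 K)"
  proof -
    have "\<alpha> * \<alpha> = (\<alpha> + \<beta>) * \<alpha> - \<alpha> * \<beta>" by (simp add: algebra_simps)
    then show ?thesis using s p by simp
  qed
  have b2: "\<beta> * \<beta> = - of_int (g1 K) * \<beta> - of_int (g0 K)"
  proof -
    have "\<beta> * \<beta> = (\<alpha> + \<beta>) * \<beta> - \<alpha> * \<beta>" by (simp add: algebra_simps)
    then show ?thesis using s p by simp
  qed
  have B: "ev \<beta> (pCons c f) = of_int c + \<beta> * (of_int a + of_int b * \<beta>)" using ab by simp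
  also have "\<dots> = of_int c + of_int a * \<beta> + of_int b * (\<beta> * \<beta>)" by (simp add: algebra_simps)
  also have "\<dots> = of_int c + of_int a * \<beta> + of_int b * (- of_int (g1 K) * \<beta> - of_int (g0 K))" by (simp only: b2)
  also have "\<dots> = of_int (c - g0 K * b) + of_int (a - g1 K * b) * \<beta>" by (simp add: algebra_simps)
  finally have B: "ev \<beta> (pCons c f) = of_int (c - g0 K * b) + of_int (a - g1 K * b) * \<beta>" .
  have "ev \<alpha> (pCons c f) = of_int c + \<alpha> * (of_int a + of_int b * \<alpha>)" using ab by simp
  also have "\<dots> = of_int c + of_int a * \<alpha> + of_int b * (\<alpha> * \<alpha>)" by (simp add: algebra_simps)
  also have "\<dots> = of_int c + of_int a * \<alpha> + of_int b * (- of_int (g1 K) * \<alpha> - of_int (g0 K))" by (simp only: a2)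
  also have "\<dots> = of_int (c - g0 K * b) + of_int (a - g1 K * b) * \<alpha>" by (simp add: algebra_simps)
  finally have "ev \<alpha> (pCons c f) = of_int (c - g0 K * b) + of_int (a - g1 K * b) * \<alpha>" .
  moreover note B
  moreover have "even (c - g0 K * b - coeff (pCons c f) 0)"
  proof -
    obtain u where u: "g0 K = 2 * u" using g0_form[of K] by blast
    show ?thesis unfolding u by simp
  qed
  ultimately show ?case by blast
qed


lemma ev_g: "\<alpha> + \<beta> = of_int (- g1 K) \<Longrightarrow> \<alpha> * \<beta> = of_int (g0 K) \<Longrightarrow> ev \<alpha> (minpoly K) = 0"
proof -
  assume s: "\<alpha> + \<beta> = of_int (- g1 K)" and p: "\<alpha> * \<beta> = of_int (g0 K)"
  have "ev \<alpha> (minpoly K) = of_int (g0 K) + \<alpha> * (of_int (g1 K) + \<alpha>)" unfolding minpoly_eq by simp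
  also have "\<dots> = \<alpha> * \<beta> - \<alpha> * (\<alpha> + \<beta>) + \<alpha> * \<alpha>" using s p by (simp add: algebra_simps)
  also have "\<dots> = 0" by (simp add: algebra_simps)
  finally show ?thesis .
qed

lemma norm_int:
  assumes s: "\<alpha> + \<beta> = of_int (- g1 K)" and p: "\<alpha> * \<beta> = of_int (g0 K)"
  shows "\<exists>Q. ev \<alpha> f * ev \<beta> f = of_int Q \<and> even (Q - coeff f 0)"
proof -
  obtain a b where ab: "ev \<alpha> f = of_int a + of_int b * \<alpha>" "ev \<beta> f = of_int a + of_int b * \<beta>" "even (a - coeff f 0)"
    using ev_pair[OF s p] by blast
  have "ev \<alpha> f * ev \<beta> f = of_int a * of_int a + of_int a * of_int b * (\<alpha> + \<beta>) + of_int b * of_int b * (\<alpha> * \<beta>)"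
    unfolding ab by (simp add: algebra_simps)
  also have "\<dots> = of_int (a * a - g1 K * a * b + g0 K * b * b)" unfolding s p by simp
  finally have 1: "ev \<alpha> f * ev \<beta> f = of_int (a * a - g1 K * a * b + g0 K * b * b)" .
  obtain u where u: "g0 K = 2 * u" using g0_form[of K] by blast
  obtain w where w: "g1 K = 2 * w" using g1_even[of K] by blast
  have E0: "even (a * a - a)" by simp
  have E: "a * a - g1 K * a * b + g0 K * b * b - coeff f 0 = (a * a - a) + (a - coeff f 0) + 2 * (u * b * b - w * a * b)"
    unfolding u w by (simp add: algebra_simps)
  have "even (a * a - g1 K * a * b + g0 K * b * b - coeff f 0)" unfolding E
    by (intro dvd_add E0 ab(3) dvd_triv_left)
  with 1 show ?thesis by blast
qed

lemma nonmember: "N < 2 * n \<Longrightarrow> \<not> Jm K n (Suc N) (upi ^ N)"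
proof
  assume lt: "N < 2 * n" and "Jm K n (Suc N) (upi ^ N)"
  then obtain h k z where e: "upi ^ N = smult (2 ^ n) h + minpoly K * k + upi ^ Suc N * z" unfolding Jm_def by blast
  obtain \<alpha> \<beta> :: complex where s: "\<alpha> + \<beta> = of_int (- g1 K)" and p: "\<alpha> * \<beta> = of_int (g0 K)" using roots_exist[of K] by blast
  have s': "\<beta> + \<alpha> = of_int (- g1 K)" and p': "\<beta> * \<alpha> = of_int (g0 K)" using s p by (simp_all add: algebra_simps)
  define q where "q = 1 - upi * z"
  have eq: "upi ^ N * q = smult (2 ^ n) h + minpoly K * k" unfolding q_def using e by (simp add: algebra_simps)
  have ea: "\<alpha> ^ N * ev \<alpha> q = 2 ^ n * ev \<alpha> h"
    using arg_cong[OF eq, of "ev \<alpha>"] ev_g[OF s p] by simp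
  have eb: "\<beta> ^ N * ev \<beta> q = 2 ^ n * ev \<beta> h"
    using arg_cong[OF eq, of "ev \<beta>"] ev_g[OF s' p'] by simp
  obtain Q where Q: "ev \<alpha> q * ev \<beta> q = of_int Q" "even (Q - coeff q 0)" using norm_int[OF s p] by blast
  obtain H where H: "ev \<alpha> h * ev \<beta> h = of_int H" using norm_int[OF s p] by blast
  have "(\<alpha> * \<beta>) ^ N * (ev \<alpha> q * ev \<beta> q) = 4 ^ n * (ev \<alpha> h * ev \<beta> h)"
  proof -
    have "(\<alpha> * \<beta>) ^ N * (ev \<alpha> q * ev \<beta> q) = (\<alpha> ^ N * ev \<alpha> q) * (\<beta> ^ N * ev \<beta> q)"
      by (simp add: power_mult_distrib algebra_simps)
    also have "\<dots> = (2 ^ n * 2 ^ n) * (ev \<alpha> h * ev \<beta> h)" unfolding ea eb by (simp add: algebra_simps)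
    also have "(2 ^ n * 2 ^ n :: complex) = 4 ^ n" by (simp add: power_mult_distrib[symmetric])
    finally show ?thesis .
  qed
  then have "of_int (g0 K ^ N * Q) = (of_int (4 ^ n * H) :: complex)" unfolding p Q H by simp
  then have I: "g0 K ^ N * Q = 4 ^ n * H" using of_int_eq_iff by blast
  have "coeff q 0 = 1" unfolding q_def upi_def by simp
  then have Qodd: "odd Q" using Q(2) by simp
  obtain u where u: "g0 K = 2 * u" "odd u" using g0_form[of K] by blast
  have f4: "(4::int) ^ n = 2 ^ N * 2 ^ (2 * n - N)"
  proof -
    have "(4::int) ^ n = 2 ^ (2 * n)" by (simp add: power_mult)
    also have "\<dots> = 2 ^ (N + (2 * n - N))" using lt by simp
    finally show ?thesis by (simp add: power_add)
  qed
  have "2 ^ N * (u ^ N * Q) = 2 ^ N * (2 ^ (2 * n - N) * H)"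
    using I unfolding u(1) f4 by (simp add: power_mult_distrib algebra_simps)
  then have "u ^ N * Q = 2 ^ (2 * n - N) * H" by simp
  moreover have "even (2 ^ (2 * n - N) * H :: int)" using lt by simp
  ultimately have "even (u ^ N * Q)" by metis
  then show False using u(2) Qodd by simp
qed


lemma V_add: "V K r x \<Longrightarrow> V K r y \<Longrightarrow> V K r (\<lambda>n. x n + y n)"
  unfolding V_def using Jm_add by blast
lemma V_diff: "V K r x \<Longrightarrow> V K r y \<Longrightarrow> V K r (\<lambda>n. x n - y n)"
  unfolding V_def using Jm_diff by blast
lemma V_uminus: "V K r x \<Longrightarrow> V K r (\<lambda>n. - x n)"
  unfolding V_def using Jm_uminus by blast
lemma V_mult: "V K a x \<Longrightarrow> V K b y \<Longrightarrow> V K (a + b) (\<lambda>n. x n * y n)"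
  unfolding V_def using Jm_mult by blast
lemma V_multl: "V K a x \<Longrightarrow> V K a (\<lambda>n. c n * x n)"
  unfolding V_def using Jm_multl by blast
lemma V_multr: "V K a x \<Longrightarrow> V K a (\<lambda>n. x n * c n)"
  unfolding V_def using Jm_multr by blast
lemma V_mono: "V K r x \<Longrightarrow> r' \<le> r \<Longrightarrow> V K r' x"
  unfolding V_def using Jm_mono by blast
lemma V_zero: "V K r (\<lambda>n. 0)"
  unfolding V_def by simp
lemma V_r0: "V K 0 x"
  unfolding V_def by simp
lemma V_X: "V K r (\<lambda>n. upi ^ r * c n)"
  unfolding V_def using Jm_X by blast
lemma V_Xc: "V K r (\<lambda>n. upi ^ r)"
  using V_X[of K r "\<lambda>n. 1"] by simp
lemma V_shift: "V K a x \<Longrightarrow> V K (a + s) (\<lambda>n. upi ^ s * x n)"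
  unfolding V_def using Jm_shift by blast
lemma V_two: "V K 2 (\<lambda>n. 2)"
  unfolding V_def using Jm_two by blast
lemma V_two3: "V K 3 (\<lambda>n. 2 - upi ^ 2)"
  unfolding V_def using Jm_two3 by blast
lemma V_cong: "V K r x \<Longrightarrow> 2 * n \<le> r \<Longrightarrow> congO K n (x n) 0"
  unfolding V_def using Jm_2n_cong by blast
lemma V_ext: "V K r x \<Longrightarrow> (\<And>n. x n = y n) \<Longrightarrow> V K r y"
proof -
  assume "V K r x" "\<And>n. x n = y n"
  then have "x = y" by auto
  with \<open>V K r x\<close> show ?thesis by simp
qed

lemma V_ext2: "V K r x \<Longrightarrow> r' \<le> r \<Longrightarrow> (\<And>n. x n = y n) \<Longrightarrow> V K r' y"
  using V_ext V_mono by metis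

lemma congO_add: "congO K n a b \<Longrightarrow> congO K n c d \<Longrightarrow> congO K n (a + c) (b + d)"
proof -
  assume "congO K n a b" "congO K n c d"
  then obtain h k h' k' where "a - b = smult (2 ^ n) h + minpoly K * k" "c - d = smult (2 ^ n) h' + minpoly K * k'"
    unfolding congO_def by blast
  then have "a + c - (b + d) = smult (2 ^ n) (h + h') + minpoly K * (k + k')" by (simp add: algebra_simps smult_add_right)
  then show ?thesis unfolding congO_def by blast
qed

lemma congO_uminus: "congO K n a b \<Longrightarrow> congO K n (- a) (- b)"
proof -
  assume "congO K n a b"
  then obtain h k where "a - b = smult (2 ^ n) h + minpoly K * k" unfolding congO_def by blast
  then have "- a - (- b) = smult (2 ^ n) (- h) + minpoly K * (- k)" by (simp add: algebra_simps)
  then show ?thesis unfolding congO_def by blast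
qed

lemma congO_mult: "congO K n a b \<Longrightarrow> congO K n c d \<Longrightarrow> congO K n (a * c) (b * d)"
proof -
  assume "congO K n a b" "congO K n c d"
  then obtain h k h' k' where 1: "a - b = smult (2 ^ n) h + minpoly K * k" and 2: "c - d = smult (2 ^ n) h' + minpoly K * k'"
    unfolding congO_def by blast
  have "a * c - b * d = (a - b) * c + b * (c - d)" by (simp add: algebra_simps)
  also have "\<dots> = smult (2 ^ n) (h * c + b * h') + minpoly K * (k * c + b * k')"
    unfolding 1 2 by (simp add: algebra_simps smult_add_right)
  finally show ?thesis unfolding congO_def by blast
qed

lemma is_O_add: "is_O K x \<Longrightarrow> is_O K y \<Longrightarrow> is_O K (\<lambda>n. x n + y n)"
  unfolding is_O_def using congO_add by blast
lemma is_O_mult: "is_O K x \<Longrightarrow> is_O K y \<Longrightarrow> is_O K (\<lambda>n. x n * y n)"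
  unfolding is_O_def using congO_mult by blast
lemma is_O_uminus: "is_O K x \<Longrightarrow> is_O K (\<lambda>n. - x n)"
  unfolding is_O_def using congO_uminus by blast
lemma is_O_diff: "is_O K x \<Longrightarrow> is_O K y \<Longrightarrow> is_O K (\<lambda>n. x n - y n)"
  using is_O_add[of K x "\<lambda>n. - y n"] is_O_uminus[of K y] by simp
lemma is_O_const: "is_O K (\<lambda>n. c)"
  unfolding is_O_def using congO_refl by blast
lemma is_O_pow: "is_O K x \<Longrightarrow> is_O K (\<lambda>n. x n ^ k)"
proof (induction k)
  case 0
  then show ?case using is_O_const[of K 1] by simp
next
  case (Suc k)
  then show ?case using is_O_mult[of K x "\<lambda>n. x n ^ k"] by simp
qed

definition E :: "ramified_case \<Rightarrow> nat \<Rightarrow> (nat \<Rightarrow> int poly) \<Rightarrow> bool" where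
  "E K N x \<longleftrightarrow> V K (Suc N) (\<lambda>n. x n - upi ^ N)"

lemma E_V: "E K N x \<Longrightarrow> V K N x"
proof -
  assume "E K N x"
  then have "V K N (\<lambda>n. x n - upi ^ N)" unfolding E_def using V_mono by (metis le_SucI order_refl)
  then have "V K N (\<lambda>n. (x n - upi ^ N) + upi ^ N)" by (rule V_add[OF _ V_Xc])
  then show ?thesis by simp
qed

lemma E_mult: "E K a x \<Longrightarrow> E K b y \<Longrightarrow> E K (a + b) (\<lambda>n. x n * y n)"
proof -
  assume ex: "E K a x" and ey: "E K b y"
  have 1: "V K (Suc a + b) (\<lambda>n. (x n - upi ^ a) * y n)"
    using V_mult[OF ex[unfolded E_def] E_V[OF ey]] .
  have 2: "V K (Suc b + a) (\<lambda>n. upi ^ a * (y n - upi ^ b))"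
    using V_shift[OF ey[unfolded E_def], of a] .
  have c1: "V K (Suc (a + b)) (\<lambda>n. (x n - upi ^ a) * y n)" using 1 by simp
  have c2: "V K (Suc (a + b)) (\<lambda>n. upi ^ a * (y n - upi ^ b))" using 2 by (simp add: add.commute)
  have "V K (Suc (a + b)) (\<lambda>n. (x n - upi ^ a) * y n + upi ^ a * (y n - upi ^ b))"
    using V_add[OF c1 c2] .
  then show ?thesis unfolding E_def
    by (rule V_ext) (simp add: algebra_simps power_add)
qed

lemma E_X: "E K r (\<lambda>n. upi ^ r)"
  unfolding E_def by (simp add: V_zero)

lemma E_pow: "E K a x \<Longrightarrow> E K (a * k) (\<lambda>n. x n ^ k)"
proof (induction k)
  case 0
  then show ?case using E_X[of K 0] by simp
next
  case (Suc k)
  then have "E K (a + a * k) (\<lambda>n. x n * x n ^ k)" using E_mult by blast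
  then show ?case by (simp add: algebra_simps)
qed

lemma E_exact: "is_O K x \<Longrightarrow> V K N x \<Longrightarrow> \<not> V K (Suc N) x \<Longrightarrow> E K N x"
  unfolding E_def using V_digit by blast

lemma greedy: "is_O K S \<Longrightarrow> V K N S \<Longrightarrow> E K N T \<Longrightarrow> V K (Suc N) S \<or> V K (Suc N) (\<lambda>n. S n + T n)"
proof -
  assume O: "is_O K S" and VS: "V K N S" and ET: "E K N T"
  from V_digit[OF O VS] show ?thesis
  proof
    assume "V K (Suc N) S" then show ?thesis ..
  next
    assume 1: "V K (Suc N) (\<lambda>n. S n - upi ^ N)"
    have 2: "V K (Suc N) (\<lambda>n. T n - upi ^ N)" using ET unfolding E_def .
    have 3: "V K (Suc N) (\<lambda>n. upi ^ N * 2)"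
      using V_mono[OF V_shift[OF V_two[of K], of N]] by (simp add: mult.commute)
    have "V K (Suc N) (\<lambda>n. (S n - upi ^ N) + (T n - upi ^ N) + upi ^ N * 2)"
      by (intro V_add 1 2 3)
    then have "V K (Suc N) (\<lambda>n. S n + T n)" by (rule V_ext) (simp add: algebra_simps)
    then show ?thesis ..
  qed
qed


lemma pow_aux: "V K a w \<Longrightarrow> V K (2 * a) (\<lambda>n. (1 + w n) ^ k - 1 - of_nat k * w n)"
proof (induction k)
  case 0
  then show ?case by (simp add: V_zero)
next
  case (Suc k)
  have w2: "V K (a + a) (\<lambda>n. w n * w n)" by (rule V_mult[OF Suc.prems Suc.prems])
  have "V K (2 * a) (\<lambda>n. (1 + w n) * ((1 + w n) ^ k - 1 - of_nat k * w n) + of_nat k * (w n * w n))"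
    apply (rule V_add)
     apply (rule V_multl[OF Suc.IH[OF Suc.prems]])
    apply (rule V_multl) using w2 by (simp add: mult_2)
  then show ?case by (rule V_ext) (simp add: algebra_simps)
qed

lemma pow_odd_E: "odd m \<Longrightarrow> 1 \<le> a \<Longrightarrow> E K a w \<Longrightarrow> E K a (\<lambda>n. (1 + w n) ^ m - 1)"
proof -
  assume m: "odd m" and a: "1 \<le> a" and Ew: "E K a w"
  have Vw: "V K a w" by (rule E_V[OF Ew])
  have 1: "V K (Suc a) (\<lambda>n. (1 + w n) ^ m - 1 - of_nat m * w n)"
    using V_mono[OF pow_aux[OF Vw, of m]] a by simp
  obtain j where j: "m = 2 * j + 1" using m oddE by blast
  have 2: "V K (Suc a) (\<lambda>n. of_nat j * (2 * w n))"
    using V_multl[OF V_mono[OF V_mult[OF V_two Vw]]] by (simp add: mult.commute)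
  have 3: "V K (Suc a) (\<lambda>n. w n - upi ^ a)" using Ew unfolding E_def .
  have "V K (Suc a) (\<lambda>n. ((1 + w n) ^ m - 1 - of_nat m * w n) + of_nat j * (2 * w n) + (w n - upi ^ a))"
    by (intro V_add 1 2 3)
  then show ?thesis unfolding E_def by (rule V_ext) (simp add: j algebra_simps)
qed

lemma delta1_E: "odd m \<Longrightarrow> E K 2 (\<lambda>n. (1 + upi) ^ (2 * m) - 1)"
proof -
  assume m: "odd m"
  have "E K 2 (\<lambda>n. 2 * upi + upi ^ 2)"
  proof -
    have "V K (2 + 1) (\<lambda>n. upi ^ 1 * 2)" by (rule V_shift[OF V_two])
    then show ?thesis unfolding E_def by (rule V_ext2) (simp_all add: mult.commute)
  qed
  moreover have "(1::nat) \<le> 2" by simp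
  ultimately have "E K 2 (\<lambda>n. (1 + (2 * upi + upi ^ 2)) ^ m - 1)" using pow_odd_E[OF m] by blast
  moreover have "(1 + (2 * upi + upi ^ 2)) ^ m - 1 = (1 + upi) ^ (2 * m) - (1::int poly)"
  proof -
    have "(1 + (2 * upi + upi ^ 2)) = ((1 + upi) ^ 2 :: int poly)" by (simp add: power2_eq_square algebra_simps)
    then show ?thesis by (simp add: power_mult)
  qed
  ultimately show ?thesis by simp
qed


lemma alg2: "z * (2 - w) + c = 2 * z + c - z * (w::int poly)"
  by (simp add: algebra_simps)

lemma deltaj_E: "odd m \<Longrightarrow> 3 \<le> j \<Longrightarrow> E K (j + 2) (\<lambda>n. (1 + upi ^ j) ^ (2 * m) - 1)"
proof -
  assume m: "odd m" and j: "3 \<le> j"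
  have "E K (j + 2) (\<lambda>n. 2 * upi ^ j + upi ^ (2 * j))"
  proof -
    have 1: "V K (Suc (j + 2)) (\<lambda>n. upi ^ j * (2 - upi ^ 2))"
      by (rule V_ext2[OF V_shift[OF V_two3[of K], of j]]) simp_all
    have 2: "V K (Suc (j + 2)) (\<lambda>n. upi ^ (2 * j))" using V_mono[OF V_Xc[of K "2 * j"]] j by simp
    have "V K (Suc (j + 2)) (\<lambda>n. upi ^ j * (2 - upi ^ 2) + upi ^ (2 * j))" by (rule V_add[OF 1 2])
    then show ?thesis unfolding E_def power_add by (rule V_ext) (rule alg2)
  qed
  moreover have "(1::nat) \<le> j + 2" by simp
  ultimately have "E K (j + 2) (\<lambda>n. (1 + (2 * upi ^ j + upi ^ (2 * j))) ^ m - 1)" using pow_odd_E[OF m] by blast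
  moreover have "(1 + (2 * upi ^ j + upi ^ (2 * j))) ^ m - 1 = (1 + upi ^ j) ^ (2 * m) - (1::int poly)"
  proof -
    have sq: "\<And>z::int poly. 1 + (2 * z + z ^ 2) = (1 + z) ^ 2" by (simp add: power2_eq_square algebra_simps)
    have "upi ^ (2 * j) = (upi ^ j) ^ 2" by (simp add: power_mult[symmetric] mult.commute)
    then have "(1 + (2 * upi ^ j + upi ^ (2 * j))) = ((1 + upi ^ j) ^ 2 :: int poly)"
      using sq by simp
    then show ?thesis by (simp add: power_mult)
  qed
  ultimately show ?thesis by simp
qed

lemma hens_alg: "a * y ^ d + b + a * y ^ d * (u ^ d - 1) = a * (y * u) ^ d + (b :: int poly)"
  by (simp add: power_mult_distrib algebra_simps)

primrec hY :: "ramified_case \<Rightarrow> nat \<Rightarrow> (nat \<Rightarrow> int poly) \<Rightarrow> (nat \<Rightarrow> int poly) \<Rightarrow> nat \<Rightarrow> (nat \<Rightarrow> int poly) \<Rightarrow> nat \<Rightarrow> (nat \<Rightarrow> int poly)" where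
  "hY K d A B K0 t 0 = t"
| "hY K d A B K0 t (Suc j) = (if V K (K0 + 5 + Suc j) (\<lambda>n. A n * hY K d A B K0 t j n ^ d + B n)
     then hY K d A B K0 t j else (\<lambda>n. hY K d A B K0 t j n * (1 + upi ^ (j + 3))))"

lemma hensel:
  assumes m: "odd m" and OA: "is_O K A" and OB: "is_O K B" and EA: "E K K0 A"
    and Ot: "is_O K t" and Et: "E K 0 t" and V5: "V K (K0 + 5) (\<lambda>n. A n * t n ^ (2 * m) + B n)"
  shows "\<exists>y. is_O K y \<and> (\<forall>n. congO K n (A n * y n ^ (2 * m) + B n) 0)"
proof -
  define d where "d = 2 * m"
  define Y where "Y = hY K d A B K0 t"
  have inv: "is_O K (Y j) \<and> E K 0 (Y j) \<and> V K (K0 + 5 + j) (\<lambda>n. A n * Y j n ^ d + B n)" for j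
  proof (induction j)
    case 0
    then show ?case using Ot Et V5 unfolding Y_def d_def by simp
  next
    case (Suc j)
    define y where "y = Y j"
    have Oy: "is_O K y" and Ey: "E K 0 y" and Vy: "V K (K0 + 5 + j) (\<lambda>n. A n * y n ^ d + B n)"
      using Suc.IH unfolding y_def by auto
    show ?case
    proof (cases "V K (K0 + 5 + Suc j) (\<lambda>n. A n * y n ^ d + B n)")
      case True
      then have "Y (Suc j) = y" unfolding Y_def y_def by simp
      then show ?thesis using Oy Ey True by simp
    next
      case False
      then have Ys: "Y (Suc j) = (\<lambda>n. y n * (1 + upi ^ (j + 3)))" unfolding Y_def y_def by simp
      have O1: "is_O K (Y (Suc j))" unfolding Ys by (rule is_O_mult[OF Oy is_O_const])
      have E1: "E K 0 (\<lambda>n. 1 + upi ^ (j + 3))"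
        unfolding E_def using V_mono[OF V_Xc[of K "j + 3"]] by simp
      have E2: "E K 0 (Y (Suc j))" unfolding Ys using E_mult[OF Ey E1] by simp
      define T where "T = (\<lambda>n. A n * y n ^ d * ((1 + upi ^ (j + 3)) ^ d - 1))"
      have ET: "E K (K0 + 5 + j) T"
      proof -
        have "E K (K0 + 0 * d) (\<lambda>n. A n * y n ^ d)" by (rule E_mult[OF EA E_pow[OF Ey]])
        moreover have "E K (j + 3 + 2) (\<lambda>n. (1 + upi ^ (j + 3)) ^ d - 1)" unfolding d_def
          by (rule deltaj_E[OF m]) simp
        ultimately have "E K (K0 + 0 * d + (j + 3 + 2)) T" unfolding T_def by (rule E_mult)
        then show ?thesis by (simp add: algebra_simps)
      qed
      have OH: "is_O K (\<lambda>n. A n * y n ^ d + B n)"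
        by (intro is_O_add is_O_mult OA OB is_O_pow Oy)
      have "V K (Suc (K0 + 5 + j)) (\<lambda>n. A n * y n ^ d + B n + T n)"
        using greedy[OF OH Vy ET] False by simp
      then have "V K (K0 + 5 + Suc j) (\<lambda>n. A n * Y (Suc j) n ^ d + B n)"
        unfolding Ys T_def by (rule V_ext2) (simp, rule hens_alg)
      then show ?thesis using O1 E2 by simp
    qed
  qed
  have diff: "V K (j + 3) (\<lambda>n. Y (Suc j) n - Y j n)" for j
  proof (cases "V K (K0 + 5 + Suc j) (\<lambda>n. A n * Y j n ^ d + B n)")
    case True
    then have "Y (Suc j) = Y j" unfolding Y_def by simp
    then show ?thesis by (simp add: V_zero)
  next
    case False
    then have Ys: "Y (Suc j) = (\<lambda>n. Y j n * (1 + upi ^ (j + 3)))" unfolding Y_def by simp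
    show ?thesis unfolding Ys using V_X[of K "j + 3" "Y j"] by (rule V_ext) (simp add: algebra_simps)
  qed
  define y where "y = (\<lambda>n. Y (2 * n) n)"
  have "is_O K y" unfolding is_O_def
  proof
    fix n
    have c1: "congO K n (Y (2 * n + 2) (Suc n)) (Y (2 * n + 2) n)"
      using inv[of "2 * n + 2"] unfolding is_O_def by blast
    have "V K (2 * n) (\<lambda>k. (Y (Suc (Suc (2 * n))) k - Y (Suc (2 * n)) k) + (Y (Suc (2 * n)) k - Y (2 * n) k))"
      by (intro V_add V_mono[OF diff]) simp_all
    then have "congO K n (Y (Suc (Suc (2 * n))) n - Y (Suc (2 * n)) n + (Y (Suc (2 * n)) n - Y (2 * n) n)) 0"
      by (rule V_cong) simp
    then have c2: "congO K n (Y (2 * n + 2) n) (Y (2 * n) n)" unfolding congO_def by simp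
    have "congO K n (Y (2 * n + 2) (Suc n)) (Y (2 * n) n)" by (rule congO_trans[OF c1 c2])
    then show "congO K n (y (Suc n)) (y n)" unfolding y_def by simp
  qed
  moreover have "congO K n (A n * y n ^ (2 * m) + B n) 0" for n
  proof -
    have "V K (K0 + 5 + 2 * n) (\<lambda>k. A k * Y (2 * n) k ^ d + B k)" using inv[of "2 * n"] by blast
    then have "congO K n (A n * Y (2 * n) n ^ d + B n) 0" by (rule V_cong) simp
    then show ?thesis unfolding y_def d_def by simp
  qed
  ultimately show ?thesis by blast
qed


lemma val_facts:
  assumes O: "is_O K x" and nz: "O_nonzero K x"
  shows "V K (valO K x) x \<and> \<not> V K (Suc (valO K x)) x"
proof -
  obtain n where n: "\<not> congO K n (x n) 0" using nz unfolding O_nonzero_def by blast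
  have ex: "\<not> dvdO K (upi ^ Suc (2 * n)) x"
  proof
    assume "dvdO K (upi ^ Suc (2 * n)) x"
    then have "V K (Suc (2 * n)) x" unfolding dvdO_V .
    then have "congO K n (x n) 0" by (rule V_cong) simp
    with n show False by simp
  qed
  have 1: "\<not> dvdO K (upi ^ Suc (valO K x)) x" unfolding valO_def by (rule LeastI[of _ "2 * n"]) (rule ex)
  have 2: "V K (valO K x) x"
  proof (cases "valO K x")
    case 0
    then show ?thesis by (simp add: V_r0)
  next
    case (Suc r)
    then have "r < (LEAST r. \<not> dvdO K (upi ^ Suc r) x)" unfolding valO_def by simp
    then have "\<not> \<not> dvdO K (upi ^ Suc r) x" by (rule not_less_Least)
    then have "V K (Suc r) x" unfolding dvdO_V by simp
    then show ?thesis using Suc by simp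
  qed
  show ?thesis using 1 2 dvdO_V by blast
qed

lemma coeff_facts:
  assumes O: "is_O K x" and nz: "O_nonzero K x"
  shows "pi_coeff K x \<in> {0, 1} \<and> V K (valO K x + 2) (\<lambda>n. x n - upi ^ valO K x * [:1, pi_coeff K x:])"
proof -
  define v where "v = valO K x"
  have Ex: "E K v x" using val_facts[OF O nz] E_exact[OF O] unfolding v_def by blast
  have Od: "is_O K (\<lambda>n. x n - upi ^ v)" by (intro is_O_diff O is_O_const)
  have Vd: "V K (Suc v) (\<lambda>n. x n - upi ^ v)" using Ex unfolding E_def .
  define P where "P = (\<lambda>c. c \<in> {0, 1} \<and> dvdO K (upi ^ (v + 2)) (\<lambda>n. x n - upi ^ v * [:1, c:]))"
  have e0: "upi ^ v * [:1, 0:] = upi ^ v" by (simp add: one_pCons[symmetric])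
  have e1: "upi ^ v * [:1, 1:] = upi ^ v + upi ^ Suc v" unfolding upi_def by (simp add: algebra_simps one_pCons[symmetric])
  have "\<exists>c. P c"
  proof -
    from V_digit[OF Od Vd] show ?thesis
    proof
      assume "V K (Suc (Suc v)) (\<lambda>n. x n - upi ^ v)"
      then have "P 0" unfolding P_def dvdO_V e0 by simp
      then show ?thesis ..
    next
      assume "V K (Suc (Suc v)) (\<lambda>n. x n - upi ^ v - upi ^ Suc v)"
      then have "P 1" unfolding P_def dvdO_V e1 by (simp add: algebra_simps)
      then show ?thesis ..
    qed
  qed
  moreover have "c = c'" if "P c" "P c'" for c c'
  proof (rule ccontr)
    assume "c \<noteq> c'"
    then have "P 0 \<and> P 1" using that unfolding P_def by auto
    then have a: "V K (v + 2) (\<lambda>n. x n - upi ^ v)" and b: "V K (v + 2) (\<lambda>n. x n - (upi ^ v + upi ^ Suc v))"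
      unfolding P_def dvdO_V e0 e1 by auto
    have "V K (v + 2) (\<lambda>n. (x n - upi ^ v) - (x n - (upi ^ v + upi ^ Suc v)))" by (rule V_diff[OF a b])
    then have "Jm K (v + 2) (Suc (Suc v)) (upi ^ Suc v)" unfolding V_def by simp
    moreover have "Suc v < 2 * (v + 2)" by simp
    ultimately show False using nonmember by blast
  qed
  ultimately have ex1: "\<exists>!c. P c" by blast
  have "pi_coeff K x = (THE c. P c)" unfolding pi_coeff_def P_def v_def by simp
  then have "P (pi_coeff K x)" using theI'[OF ex1] by simp
  then show ?thesis unfolding P_def dvdO_V v_def by simp
qed


lemma greedy_b: "is_O K S \<Longrightarrow> V K N S \<Longrightarrow> E K N T \<Longrightarrow> \<exists>b. V K (Suc N) (\<lambda>n. S n + (if b then T n else 0))"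
proof -
  assume "is_O K S" "V K N S" "E K N T"
  from greedy[OF this] show ?thesis
  proof
    assume "V K (Suc N) S" then have "V K (Suc N) (\<lambda>n. S n + (if False then T n else 0))" by simp
    then show ?thesis ..
  next
    assume "V K (Suc N) (\<lambda>n. S n + T n)" then have "V K (Suc N) (\<lambda>n. S n + (if True then T n else 0))" by simp
    then show ?thesis ..
  qed
qed

lemma is_O_if: "is_O K T \<Longrightarrow> is_O K (\<lambda>n. if b then T n else 0)"
  by (cases b) (simp_all add: is_O_const)

lemma core:
  assumes m: "odd m" and OAi: "is_O K Ai" and OAj: "is_O K Aj" and OAl: "is_O K Al"
    and EAi: "E K K0 Ai" and EAl: "E K (Suc K0) Al"
    and Vij: "V K (K0 + 2) (\<lambda>n. Ai n + Aj n - upi ^ Suc K0)"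
    and OC: "is_O K Ct" and VC: "V K (K0 + 2) Ct" and OT4: "is_O K T4" and ET4: "E K (K0 + 4) T4"
    and yt: "\<And>b n. At n * (ytf b) ^ (2 * m) = Ct n + (if b then T4 n else 0)"
  shows "\<exists>yi yl b4. is_O K yi \<and> (\<forall>n. congO K n (Ai n * yi n ^ (2 * m) + Aj n + Al n * yl ^ (2 * m) + At n * (ytf b4) ^ (2 * m)) 0)"
proof -
  define d where "d = 2 * m"
  define \<delta> where "\<delta> = (1 + upi) ^ d - (1 :: int poly)"
  have Ed: "E K 2 (\<lambda>n. \<delta>)" unfolding \<delta>_def d_def by (rule delta1_E[OF m])
  define S0 where "S0 = (\<lambda>n. Ai n + Aj n + Al n + Ct n)"
  have OS0: "is_O K S0" unfolding S0_def by (intro is_O_add OAi OAj OAl OC)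
  have VS0: "V K (K0 + 2) S0"
  proof -
    have 1: "V K (K0 + 2) (\<lambda>n. Al n - upi ^ Suc K0)" using EAl unfolding E_def by simp
    have 2: "V K (K0 + 2) (\<lambda>n. upi ^ Suc K0 * 2)"
      by (rule V_ext2[OF V_shift[OF V_two[of K], of "Suc K0"]]) simp_all
    have "V K (K0 + 2) (\<lambda>n. (Ai n + Aj n - upi ^ Suc K0) + (Al n - upi ^ Suc K0) + upi ^ Suc K0 * 2 + Ct n)"
      by (intro V_add Vij 1 2 VC)
    then show ?thesis unfolding S0_def by (rule V_ext) (simp add: algebra_simps)
  qed
  define T2 where "T2 = (\<lambda>n. Ai n * \<delta>)"
  have ET2: "E K (K0 + 2) T2" unfolding T2_def by (rule E_mult[OF EAi Ed])
  have OT2: "is_O K T2" unfolding T2_def by (intro is_O_mult OAi is_O_const)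
  obtain b2 where b2: "V K (Suc (K0 + 2)) (\<lambda>n. S0 n + (if b2 then T2 n else 0))"
    using greedy_b[OF OS0 VS0 ET2] by blast
  define S1 where "S1 = (\<lambda>n. S0 n + (if b2 then T2 n else 0))"
  have OS1: "is_O K S1" unfolding S1_def by (intro is_O_add OS0 is_O_if OT2)
  define T3 where "T3 = (\<lambda>n. Al n * \<delta>)"
  have ET3: "E K (K0 + 3) T3" unfolding T3_def using E_mult[OF EAl Ed] by (simp add: numeral_3_eq_3)
  have OT3: "is_O K T3" unfolding T3_def by (intro is_O_mult OAl is_O_const)
  obtain b3 where b3: "V K (Suc (K0 + 3)) (\<lambda>n. S1 n + (if b3 then T3 n else 0))"
    using greedy_b[OF OS1 _ ET3] b2 unfolding S1_def by (simp add: numeral_3_eq_3) blast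
  define S2 where "S2 = (\<lambda>n. S1 n + (if b3 then T3 n else 0))"
  have OS2: "is_O K S2" unfolding S2_def by (intro is_O_add OS1 is_O_if OT3)
  obtain b4 where b4: "V K (Suc (K0 + 4)) (\<lambda>n. S2 n + (if b4 then T4 n else 0))"
    using greedy_b[OF OS2 _ ET4] b3 unfolding S2_def by (simp add: eval_nat_numeral) blast
  define yi0 where "yi0 = (if b2 then 1 + upi else 1)"
  define yl where "yl = (if b3 then 1 + upi else 1)"
  define B where "B = (\<lambda>n. Aj n + Al n * yl ^ d + At n * (ytf b4) ^ d)"
  have OB: "is_O K B"
  proof -
    have "is_O K (\<lambda>n. Aj n + Al n * yl ^ d + (Ct n + (if b4 then T4 n else 0)))"
      by (intro is_O_add OAj is_O_mult OAl is_O_const OC is_O_if OT4)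
    then show ?thesis unfolding B_def using yt d_def by simp
  qed
  have pw: "(1 + upi) ^ d = 1 + \<delta>" unfolding \<delta>_def by simp
  have pw2: "(upi + 1) ^ d = 1 + \<delta>" unfolding \<delta>_def by (simp add: add.commute)
  have "V K (K0 + 5) (\<lambda>n. Ai n * yi0 ^ d + B n)"
  proof -
    have "V K (K0 + 5) (\<lambda>n. S2 n + (if b4 then T4 n else 0))" using b4 by (simp add: eval_nat_numeral)
    then show ?thesis
      unfolding S2_def S1_def S0_def B_def yi0_def yl_def T2_def T3_def
      by (rule V_ext) (cases b2; cases b3; simp add: yt[unfolded d_def[symmetric]] pw pw2 algebra_simps)
  qed
  moreover have "E K 0 (\<lambda>n. yi0)"
  proof (cases b2)
    case True
    have "V K 1 (\<lambda>n. upi ^ 1 * 1)" by (rule V_X)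
    then show ?thesis using True unfolding yi0_def E_def by simp
  next
    case False
    then show ?thesis using E_X[of K 0] unfolding yi0_def by simp
  qed
  ultimately obtain y where "is_O K y" "\<forall>n. congO K n (Ai n * y n ^ (2 * m) + B n) 0"
    using hensel[OF m OAi OB EAi is_O_const] unfolding d_def by blast
  then show ?thesis unfolding B_def d_def by (intro exI[of _ y] exI[of _ yl] exI[of _ b4]) (simp add: add.assoc)
qed


lemma scale_exists:
  assumes "0 < (d::nat)" "v mod d = (k + off) mod d" "v \<le> K0 + off" "K0 mod d = k mod d"
  shows "\<exists>e. v + d * e = K0 + off"
proof -
  have "(K0 + off) mod d = (k + off) mod d" using assms(4) by (metis mod_add_left_eq)
  then have "(K0 + off) mod d = v mod d" using assms(2) by simp
  then have "d dvd (K0 + off) - v" using assms(3) by (simp add: mod_eq_dvd_iff_nat)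
  then obtain e where "(K0 + off) - v = d * e" by blast
  then show ?thesis using assms(3) by (intro exI[of _ e]) simp
qed

lemma coeffA:
  assumes O: "is_O K x" and nz: "O_nonzero K x" and ve: "valO K x + d * e = N"
  shows "is_O K (\<lambda>n. x n * upi ^ (d * e)) \<and> E K N (\<lambda>n. x n * upi ^ (d * e))
     \<and> V K (N + 2) (\<lambda>n. x n * upi ^ (d * e) - upi ^ N * [:1, pi_coeff K x:])"
proof (intro conjI)
  show "is_O K (\<lambda>n. x n * upi ^ (d * e))" by (intro is_O_mult O is_O_const)
  have "E K (valO K x) x" using val_facts[OF O nz] E_exact[OF O] by blast
  from E_mult[OF this E_X[of K "d * e"]] show "E K N (\<lambda>n. x n * upi ^ (d * e))" using ve by simp
  have "V K (valO K x + 2) (\<lambda>n. x n - upi ^ valO K x * [:1, pi_coeff K x:])" using coeff_facts[OF O nz] by blast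
  from V_shift[OF this, of "d * e"]
  show "V K (N + 2) (\<lambda>n. x n * upi ^ (d * e) - upi ^ N * [:1, pi_coeff K x:])"
    by (rule V_ext2) (simp_all add: ve[symmetric] power_add algebra_simps)
qed

lemma lvl_ne: "a < b \<Longrightarrow> b - a < (d::nat) \<Longrightarrow> (k + a) mod d = (k + b) mod d \<Longrightarrow> False"
proof -
  assume ab: "a < b" "b - a < d" "(k + a) mod d = (k + b) mod d"
  have "(k + b) mod d = (k + a) mod d" using ab(3) by simp
  then have "d dvd (k + b) - (k + a)" using ab(1) by (subst mod_eq_dvd_iff_nat[symmetric]) simp_all
  then have "d dvd b - a" by simp
  then have "d \<le> b - a" using ab(1) by (simp add: dvd_imp_le)
  then show False using ab(2) by simp
qed

lemma pow_scale: "c * (upi ^ e * y) ^ d = (c * upi ^ (d * e)) * (y ^ d :: int poly)"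
  by (simp add: power_mult_distrib power_mult[symmetric] mult.commute mult.left_commute)


lemma pow_scale1: "c * (upi ^ e) ^ d = c * (upi ^ (d * e) :: int poly)"
  by (simp add: power_mult[symmetric] mult.commute)

lemma alg3: "(A - Z * P) + (B - Z * Q) + Z * 2 = A + B - Z * (P + Q) + Z * (2::int poly)"
  by (simp add: algebra_simps)

lemma alg4: "A + B - Z * (2 + u) + Z * 2 = A + B - Z * (u::int poly)"
  by (simp add: algebra_simps)

theorem lemma17:
  fixes K :: ramified_case and m s k i j l t :: nat and a :: "nat \<Rightarrow> nat \<Rightarrow> int poly"
  assumes "odd m" and "m \<ge> 3"
    and "\<forall>q<s. is_O K (a q) \<and> O_nonzero K (a q)"
    and "i < s" and "j < s" and "i \<noteq> j"
    and "level K (2 * m) (a i) = k mod (2 * m)"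
    and "level K (2 * m) (a j) = k mod (2 * m)"
    and "pi_coeff K (a i) \<noteq> pi_coeff K (a j)"
    and "l < s" and "level K (2 * m) (a l) = (k + 1) mod (2 * m)"
    and "t < s" and "level K (2 * m) (a t) = (k + 2) mod (2 * m)
                   \<or> level K (2 * m) (a t) = (k + 4) mod (2 * m)"
  shows "has_nontrivial_zero K (2 * m) s a"
proof -
  note m = assms(1)
  define d where "d = 2 * m"
  have d6: "6 \<le> d" using assms(2) unfolding d_def by simp
  have Oi: "is_O K (a i)" and Ni: "O_nonzero K (a i)" using assms(3,4) by auto
  have Oj: "is_O K (a j)" and Nj: "O_nonzero K (a j)" using assms(3,5) by auto
  have Ol: "is_O K (a l)" and Nl: "O_nonzero K (a l)" using assms(3,10) by auto
  have Ot: "is_O K (a t)" and Nt: "O_nonzero K (a t)" using assms(3,12) by auto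
  define ri where "ri = valO K (a i)"
  define rj where "rj = valO K (a j)"
  define rl where "rl = valO K (a l)"
  define rt where "rt = valO K (a t)"
  have li: "ri mod d = (k + 0) mod d" using assms(7) unfolding ri_def d_def level_def by simp
  have lj: "rj mod d = (k + 0) mod d" using assms(8) unfolding rj_def d_def level_def by simp
  have ll: "rl mod d = (k + 1) mod d" using assms(11) unfolding rl_def d_def level_def by simp
  obtain Eo where Eo: "Eo = 2 \<or> Eo = 4" and lt: "rt mod d = (k + Eo) mod d"
    using assms(13) unfolding rt_def d_def level_def by blast
  have dist: "i \<noteq> l" "j \<noteq> l" "i \<noteq> t" "j \<noteq> t" "l \<noteq> t"
  proof -
    show "i \<noteq> l" using lvl_ne[of 0 1 d k] li ll d6 unfolding ri_def rl_def by auto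
    show "j \<noteq> l" using lvl_ne[of 0 1 d k] lj ll d6 unfolding rj_def rl_def by auto
    show "i \<noteq> t" using lvl_ne[of 0 Eo d k] li lt d6 Eo unfolding ri_def rt_def by auto
    show "j \<noteq> t" using lvl_ne[of 0 Eo d k] lj lt d6 Eo unfolding rj_def rt_def by auto
    show "l \<noteq> t" using lvl_ne[of 1 Eo d k] ll lt d6 Eo unfolding rl_def rt_def by auto
  qed
  define K0 where "K0 = k + d * (ri + rj + rl + rt)"
  have dpos: "0 < d" using d6 by simp
  have K0mod: "K0 mod d = k mod d" unfolding K0_def by simp
  have geq: "ri + rj + rl + rt \<le> d * (ri + rj + rl + rt)" using dpos by simp
  obtain ei where ei: "ri + d * ei = K0 + 0" using scale_exists[OF dpos li _ K0mod] geq unfolding K0_def by fastforce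
  obtain ej where ej: "rj + d * ej = K0 + 0" using scale_exists[OF dpos lj _ K0mod] geq unfolding K0_def by fastforce
  obtain el where el: "rl + d * el = K0 + 1" using scale_exists[OF dpos ll _ K0mod] geq unfolding K0_def by fastforce
  obtain et where et: "rt + d * et = K0 + Eo" using scale_exists[OF dpos lt _ K0mod] geq unfolding K0_def by fastforce
  define Ai where "Ai = (\<lambda>n. a i n * upi ^ (d * ei))"
  define Aj where "Aj = (\<lambda>n. a j n * upi ^ (d * ej))"
  define Al where "Al = (\<lambda>n. a l n * upi ^ (d * el))"
  define At where "At = (\<lambda>n. a t n * upi ^ (d * et))"
  have ei': "valO K (a i) + d * ei = K0" using ei unfolding ri_def by simp
  have Fi: "is_O K Ai \<and> E K K0 Ai \<and> V K (K0 + 2) (\<lambda>n. Ai n - upi ^ K0 * [:1, pi_coeff K (a i):])"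
    unfolding Ai_def by (rule coeffA[OF Oi Ni ei'])
  have ej': "valO K (a j) + d * ej = K0" using ej unfolding rj_def by simp
  have Fj: "is_O K Aj \<and> E K K0 Aj \<and> V K (K0 + 2) (\<lambda>n. Aj n - upi ^ K0 * [:1, pi_coeff K (a j):])"
    unfolding Aj_def by (rule coeffA[OF Oj Nj ej'])
  have el': "valO K (a l) + d * el = Suc K0" using el unfolding rl_def by simp
  have Fl: "is_O K Al \<and> E K (Suc K0) Al"
    unfolding Al_def using coeffA[OF Ol Nl el'] by blast
  have et': "valO K (a t) + d * et = K0 + Eo" using et unfolding rt_def by simp
  have Ft: "is_O K At \<and> E K (K0 + Eo) At"
    unfolding At_def using coeffA[OF Ot Nt et'] by blast
  have ci: "pi_coeff K (a i) \<in> {0, 1}" using coeff_facts[OF Oi Ni] by blast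
  have cj: "pi_coeff K (a j) \<in> {0, 1}" using coeff_facts[OF Oj Nj] by blast
  have csum: "[:1, pi_coeff K (a i):] + [:1, pi_coeff K (a j):] = 2 + upi"
    using ci cj assms(9) unfolding upi_def by (auto simp: numeral_poly)
  have Vij: "V K (K0 + 2) (\<lambda>n. Ai n + Aj n - upi ^ Suc K0)"
  proof -
    have 2: "V K (K0 + 2) (\<lambda>n. upi ^ K0 * 2)" by (rule V_ext2[OF V_shift[OF V_two[of K], of K0]]) simp_all
    have "V K (K0 + 2) (\<lambda>n. (Ai n - upi ^ K0 * [:1, pi_coeff K (a i):]) + (Aj n - upi ^ K0 * [:1, pi_coeff K (a j):]) + upi ^ K0 * 2)"
      using Fi Fj 2 by (intro V_add) auto
    moreover have "(Ai n - upi ^ K0 * [:1, pi_coeff K (a i):]) + (Aj n - upi ^ K0 * [:1, pi_coeff K (a j):]) + upi ^ K0 * 2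
       = Ai n + Aj n - upi ^ Suc K0" for n
    proof -
      have "(Ai n - upi ^ K0 * [:1, pi_coeff K (a i):]) + (Aj n - upi ^ K0 * [:1, pi_coeff K (a j):]) + upi ^ K0 * 2
         = Ai n + Aj n - upi ^ K0 * ([:1, pi_coeff K (a i):] + [:1, pi_coeff K (a j):]) + upi ^ K0 * 2"
        by (rule alg3)
      also have "\<dots> = Ai n + Aj n - upi ^ K0 * upi" unfolding csum by (rule alg4)
      also have "\<dots> = Ai n + Aj n - upi ^ Suc K0" by (simp add: mult.commute)
      finally show ?thesis .
    qed
    ultimately show ?thesis by (rule V_ext)
  qed
  have "\<exists>yi yl yt. is_O K yi \<and> (\<forall>n. congO K n (Ai n * yi n ^ (2 * m) + Aj n + Al n * yl ^ (2 * m) + At n * yt ^ (2 * m)) 0)"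
  proof -
    have OAi: "is_O K Ai" and EAi: "E K K0 Ai" using Fi by auto
    have OAj: "is_O K Aj" using Fj by auto
    have OAl: "is_O K Al" and EAl: "E K (Suc K0) Al" using Fl by auto
    have OAt: "is_O K At" and EAt: "E K (K0 + Eo) At" using Ft by auto
    from Eo show ?thesis
    proof
      assume E2: "Eo = 2"
      define \<delta> where "\<delta> = (1 + upi) ^ (2 * m) - (1 :: int poly)"
      have Ed: "E K 2 (\<lambda>n. \<delta>)" unfolding \<delta>_def by (rule delta1_E[OF m])
      have VC: "V K (K0 + 2) At" using E_V[OF EAt] E2 by simp
      have ET4: "E K (K0 + 4) (\<lambda>n. At n * \<delta>)" using E_mult[OF EAt Ed] E2 by (simp add: eval_nat_numeral)
      have OT4: "is_O K (\<lambda>n. At n * \<delta>)" by (intro is_O_mult OAt is_O_const)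
      have yt: "At n * (if b then 1 + upi else 1) ^ (2 * m) = At n + (if b then At n * \<delta> else 0)" for b n
        unfolding \<delta>_def by (cases b) (simp_all add: algebra_simps)
      obtain yi yl b4 where "is_O K yi \<and> (\<forall>n. congO K n (Ai n * yi n ^ (2 * m) + Aj n + Al n * yl ^ (2 * m)
          + At n * (if b4 then 1 + upi else 1) ^ (2 * m)) 0)"
        using core[OF m OAi OAj OAl EAi EAl Vij OAt VC OT4 ET4 yt] by blast
      then show ?thesis by blast
    next
      assume E4: "Eo = 4"
      have VC: "V K (K0 + 2) (\<lambda>n. 0)" by (rule V_zero)
      have ET4: "E K (K0 + 4) At" using EAt E4 by simp
      have m0: "0 < m" using m by (cases m) auto
      have yt: "At n * (if b then 1 else 0) ^ (2 * m) = 0 + (if b then At n else 0)" for b n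
        using m0 by (cases b) simp_all
      obtain yi yl b4 where "is_O K yi \<and> (\<forall>n. congO K n (Ai n * yi n ^ (2 * m) + Aj n + Al n * yl ^ (2 * m)
          + At n * (if b4 then 1 else 0) ^ (2 * m)) 0)"
        using core[OF m OAi OAj OAl EAi EAl Vij is_O_const VC OAt ET4 yt] by blast
      then show ?thesis by blast
    qed
  qed
  then obtain yi yl yt where Oyi: "is_O K yi"
    and cong: "\<And>n. congO K n (Ai n * yi n ^ d + Aj n + Al n * yl ^ d + At n * yt ^ d) 0"
    unfolding d_def by blast
  define x where "x = (\<lambda>q. if q = i then (\<lambda>n. upi ^ ei * yi n) else if q = j then (\<lambda>n. upi ^ ej)
     else if q = l then (\<lambda>n. upi ^ el * yl) else if q = t then (\<lambda>n. upi ^ et * yt) else (\<lambda>n. 0))"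
  have xi: "x i = (\<lambda>n. upi ^ ei * yi n)" unfolding x_def by simp
  have xj: "x j = (\<lambda>n. upi ^ ej)" using assms(6) unfolding x_def by simp
  have xl: "x l = (\<lambda>n. upi ^ el * yl)" using dist unfolding x_def by simp
  have xt: "x t = (\<lambda>n. upi ^ et * yt)" using dist unfolding x_def by simp
  have x0: "q \<notin> {i, j, l, t} \<Longrightarrow> x q = (\<lambda>n. 0)" for q unfolding x_def by simp
  have "\<forall>q<s. is_O K (x q)"
  proof (intro allI impI)
    fix q assume "q < s"
    show "is_O K (x q)"
      unfolding x_def by (simp add: is_O_mult is_O_const Oyi)
  qed
  moreover have "\<exists>q<s. O_nonzero K (x q)"
  proof (intro exI conjI)
    show "j < s" by (rule assms(5))
    show "O_nonzero K (x j)" unfolding xj O_nonzero_def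
    proof
      show "\<not> congO K (Suc ej) (upi ^ ej) 0"
      proof
        assume "congO K (Suc ej) (upi ^ ej) 0"
        then have "Jm K (Suc ej) (Suc ej) (upi ^ ej)" by (rule congO_Jm)
        moreover have "ej < 2 * Suc ej" by simp
        ultimately show False using nonmember by blast
      qed
    qed
  qed
  moreover have "\<forall>n. congO K n (\<Sum>q<s. a q n * x q n ^ d) 0"
  proof
    fix n
    have sub: "{i, j, l, t} \<subseteq> {..<s}" using assms(4,5,10,12) by auto
    have "(\<Sum>q<s. a q n * x q n ^ d) = (\<Sum>q\<in>{i, j, l, t}. a q n * x q n ^ d)"
      by (rule sum.mono_neutral_right) (use sub x0 dpos in auto)
    also have "\<dots> = a i n * x i n ^ d + a j n * x j n ^ d + a l n * x l n ^ d + a t n * x t n ^ d"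
      using assms(6) dist by (simp add: algebra_simps)
    also have "\<dots> = Ai n * yi n ^ d + Aj n + Al n * yl ^ d + At n * yt ^ d"
      unfolding xi xj xl xt Ai_def Aj_def Al_def At_def by (simp only: pow_scale pow_scale1)
    finally show "congO K n (\<Sum>q<s. a q n * x q n ^ d) 0" using cong by simp
  qed
  ultimately show ?thesis unfolding has_nontrivial_zero_def d_def by blast
qed

end
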